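(* There is a constant $c$ such that for every Boolean circuit $C$ with input nodes $\mathrm{in}_1,\dots,\mathrm{in}_n$ whose gates are only $\neg$-gates, $\vee$-gates and $\wedge$-gates, there exists an instruction sequence $X\in\mathrm{IS}_{br}$ in which the basic instruction $\mathrm{out}.\mathrm{set}{:}F$ does not occur (in any plain, positive test or negative test instruction) such that $X$ computes the $n$-ary Boolean function induced by $C$ and $|X|\le c\cdot(\mathrm{size}(C)+1)$.
   Context: $\mathbb B=\{T,F\}$. A Boolean circuit with input nodes $\mathrm{in}_1,\dots,\mathrm{in}_n$ is a finite directed acyclic graph whose non-input nodes (gates) are $\neg$-gates with one predecessor or $\vee$-/$\wedge$-gates with two predecessors, with one designated output node; the induced function $\mathbb B^n\to\mathbb B$ is the value of the output node when $\mathrm{in}_j$ carries $b_j$. Its size is its number of nodes. A primitive instruction is one of: a plain basic instruction $a$, a positive test instruction $+a$, a negative test instruction $-a$ (for a basic instruction $a$), a forward jump instruction $\#l$ ($l\in\mathbb N$), or the termination instruction $!$. An instruction sequence is a finite nonempty sequence $X=u_1;\dots;u_k$ of primitive instructions; its length is $|X|=k$. Basic instructions have the form $f.m$ where the focus $f$ is one of $\mathrm{in}{:}i$, $\mathrm{aux}{:}i$ ($i\ge 1$) or $\mathrm{out}$, each naming a Boolean register, and the method $m$ is one of $\mathrm{set}{:}T$, $\mathrm{set}{:}F$, $\mathrm{get}$. Executing $f.\mathrm{set}{:}b$ sets register $f$ to $b$ and yields reply $b$; executing $f.\mathrm{get}$ leaves the register unchanged and yields its content as reply. Execution of $X=u_1;\dots;u_k$: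 a counter starts at $1$. If the counter exceeds $k$, execution deadlocks. At position $i$: if $u_i=!$, execution terminates; if $u_i=\#l$, execution deadlocks if $l=0$ and otherwise the counter becomes $i+l$; if $u_i$ is $a$, $+a$ or $-a$, the basic instruction $a$ is executed yielding reply $r$, and the counter becomes $i+1$ for $u_i=a$; for $u_i=+a$ it becomes $i+1$ if $r=T$ and $i+2$ if $r=F$; for $u_i=-a$ it becomes $i+1$ if $r=F$ and $i+2$ if $r=T$. $\mathrm{IS}_{br}$ is the set of instruction sequences in which every basic instruction occurring belongs to $\{f.\mathrm{get}: f=\mathrm{in}{:}i \text{ or } f=\mathrm{aux}{:}i\}\cup\{f.\mathrm{set}{:}b: f=\mathrm{aux}{:}i \text{ or } f=\mathrm{out},\ b\in\mathbb B\}$. $X\in\mathrm{IS}_{br}$ computes $f:\mathbb B^n\to\mathbb B$ if for every $(b_1,\dots,b_n)\in\mathbb B^n$: when $X$ is executed with register $\mathrm{in}{:}j$ initialised to $b_j$ ($j\le n$) and all registers $\mathrm{aux}{:}i$ and $\mathrm{out}$ initialised to $F$, execution terminates (does not deadlock) without ever executing a basic instruction with focus $\mathrm{in}{:}j$ for $j>n$, and at termination register $\mathrm{out}$ contains $f(b_1,\dots,b_n)$. *)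

theory Defs
  imports Main
begin

text \<open>A circuit with inputs in_1..in_n is represented by the number n of inputs,
a list of gates and an output node.  Nodes are numbered 0..n+length gs-1:
node j-1 (j = 1..n) is the input node in_j, node n+i is the i-th gate.
Each gate refers only to nodes with smaller numbers (a topological order of
the DAG; every finite DAG admits one).\<close>

datatype gate = NotG nat | OrG nat nat | AndG nat nat

fun gate_preds :: "gate \<Rightarrow> nat list" where
  "gate_preds (NotG a) = [a]"
| "gate_preds (OrG a b) = [a, b]"
| "gate_preds (AndG a b) = [a, b]"

definition wf_circuit :: "nat \<Rightarrow> gate list \<Rightarrow> nat \<Rightarrow> bool" where
  "wf_circuit n gs out \<longleftrightarrow>
     (\<forall>i < length gs. \<forall>p \<in> set (gate_preds (gs ! i)). p < n + i)
     \<and> out < n + length gs"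

definition circuit_size :: "nat \<Rightarrow> gate list \<Rightarrow> nat" where
  "circuit_size n gs = n + length gs"

fun gate_val :: "bool list \<Rightarrow> gate \<Rightarrow> bool" where
  "gate_val vs (NotG a) = (\<not> vs ! a)"
| "gate_val vs (OrG a b) = (vs ! a \<or> vs ! b)"
| "gate_val vs (AndG a b) = (vs ! a \<and> vs ! b)"

fun eval_gates :: "bool list \<Rightarrow> gate list \<Rightarrow> bool list" where
  "eval_gates vs [] = vs"
| "eval_gates vs (g # gs) = eval_gates (vs @ [gate_val vs g]) gs"

definition circuit_fun :: "gate list \<Rightarrow> nat \<Rightarrow> bool list \<Rightarrow> bool" where
  "circuit_fun gs out bs = eval_gates bs gs ! out"

datatype focus = In nat | Aux nat | Out
datatype meth = SetM bool | Get
datatype basic = BI focus meth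
datatype prim = Plain basic | PosT basic | NegT basic | Jump nat | Term

type_synonym regs = "focus \<Rightarrow> bool"

fun basic_of :: "prim \<Rightarrow> basic option" where
  "basic_of (Plain a) = Some a"
| "basic_of (PosT a) = Some a"
| "basic_of (NegT a) = Some a"
| "basic_of (Jump l) = None"
| "basic_of Term = None"

fun allowed_br :: "basic \<Rightarrow> bool" where
  "allowed_br (BI (In i) Get) = (i \<ge> 1)"
| "allowed_br (BI (Aux i) Get) = (i \<ge> 1)"
| "allowed_br (BI (Aux i) (SetM b)) = (i \<ge> 1)"
| "allowed_br (BI Out (SetM b)) = True"
| "allowed_br _ = False"

definition IS_br :: "prim list \<Rightarrow> bool" where
  "IS_br X \<longleftrightarrow> X \<noteq> [] \<and> (\<forall>u \<in> set X. \<forall>a. basic_of u = Some a \<longrightarrow> allowed_br a)"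

fun exec_basic :: "basic \<Rightarrow> regs \<Rightarrow> bool \<times> regs" where
  "exec_basic (BI f (SetM b)) \<sigma> = (b, \<sigma>(f := b))"
| "exec_basic (BI f Get) \<sigma> = (\<sigma> f, \<sigma>)"

fun focus_ok :: "nat \<Rightarrow> basic \<Rightarrow> bool" where
  "focus_ok n (BI (In j) m) = (j \<le> n)"
| "focus_ok n (BI _ m) = True"

text \<open>term_run X n i \<sigma> \<sigma>': execution of X started at position i (1-based) with
registers \<sigma> terminates (no deadlock) with registers \<sigma>', never executing a basic
instruction with focus in:j for j > n.\<close>
inductive term_run :: "prim list \<Rightarrow> nat \<Rightarrow> nat \<Rightarrow> regs \<Rightarrow> regs \<Rightarrow> bool"
  for X :: "prim list" and n :: nat where
  halt: "\<lbrakk>1 \<le> i; i \<le> length X; X ! (i - 1) = Term\<rbrakk> \<Longrightarrow> term_run X n i \<sigma> \<sigma>"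
| jump: "\<lbrakk>1 \<le> i; i \<le> length X; X ! (i - 1) = Jump l; l \<noteq> 0;
          term_run X n (i + l) \<sigma> \<sigma>'\<rbrakk> \<Longrightarrow> term_run X n i \<sigma> \<sigma>'"
| plain: "\<lbrakk>1 \<le> i; i \<le> length X; X ! (i - 1) = Plain a; focus_ok n a;
          term_run X n (i + 1) (snd (exec_basic a \<sigma>)) \<sigma>'\<rbrakk> \<Longrightarrow> term_run X n i \<sigma> \<sigma>'"
| pos: "\<lbrakk>1 \<le> i; i \<le> length X; X ! (i - 1) = PosT a; focus_ok n a;
          term_run X n (if fst (exec_basic a \<sigma>) then i + 1 else i + 2) (snd (exec_basic a \<sigma>)) \<sigma>'\<rbrakk>
        \<Longrightarrow> term_run X n i \<sigma> \<sigma>'"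
| neg: "\<lbrakk>1 \<le> i; i \<le> length X; X ! (i - 1) = NegT a; focus_ok n a;
          term_run X n (if fst (exec_basic a \<sigma>) then i + 2 else i + 1) (snd (exec_basic a \<sigma>)) \<sigma>'\<rbrakk>
        \<Longrightarrow> term_run X n i \<sigma> \<sigma>'"

text \<open>Initial registers: in:j holds b_j (j = 1..n), all aux:i and out hold F.
(Registers in:j with j > n are never accessed in a successful run.)\<close>
fun init_regs :: "bool list \<Rightarrow> regs" where
  "init_regs bs (In j) = (1 \<le> j \<and> j \<le> length bs \<and> bs ! (j - 1))"
| "init_regs bs (Aux i) = False"
| "init_regs bs Out = False"

definition computes :: "prim list \<Rightarrow> nat \<Rightarrow> (bool list \<Rightarrow> bool) \<Rightarrow> bool" where
  "computes X n f \<longleftrightarrow>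
     (\<forall>bs. length bs = n \<longrightarrow> (\<exists>\<sigma>'. term_run X n 1 (init_regs bs) \<sigma>' \<and> \<sigma>' Out = f bs))"

end

theory Submission
  imports Defs
begin

definition reg :: "nat \<Rightarrow> nat \<Rightarrow> focus" where
  "reg n k = (if k < n then In (Suc k) else Aux (Suc k))"

definition getb :: "nat \<Rightarrow> nat \<Rightarrow> basic" where
  "getb n k = BI (reg n k) Get"

definition setT :: "nat \<Rightarrow> nat \<Rightarrow> prim" where
  "setT n i = Plain (BI (Aux (Suc (n + i))) (SetM True))"

fun blk :: "nat \<Rightarrow> nat \<Rightarrow> gate \<Rightarrow> prim list" where
  "blk n i (NotG a) = [NegT (getb n a), setT n i]"
| "blk n i (OrG a b) = [NegT (getb n a), PosT (getb n b), setT n i]"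
| "blk n i (AndG a b) = [NegT (getb n a), Jump 3, PosT (getb n b), setT n i]"

lemma focus_ok_get[simp]: "focus_ok n (getb n a)"
  by (simp add: getb_def reg_def)

lemma exec_get[simp]: "exec_basic (getb n a) \<sigma> = (\<sigma> (reg n a), \<sigma>)"
  by (simp add: getb_def)

lemma exec_setT[simp]: "setT n i = Plain (BI (Aux (Suc (n + i))) (SetM True))"
  by (simp add: setT_def)

lemma blk_len: "length (blk n i g) \<le> 4"
  by (cases g) auto

lemma blk_run:
  assumes X: "\<forall>j<length (blk n i g). X ! (p+j) = blk n i g ! j"
    and L: "p + length (blk n i g) \<le> length X"
    and A: "\<sigma> (Aux (Suc (n+i))) = False"
    and V: "\<forall>a \<in> set (gate_preds g). \<sigma> (reg n a) = vals ! a"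
    and R: "term_run X n (Suc p + length (blk n i g)) (\<sigma>(Aux (Suc (n+i)) := gate_val vals g)) \<sigma>'"
  shows "term_run X n (Suc p) \<sigma> \<sigma>'"
proof (cases g)
  case (NotG a)
  have x0: "X ! p = NegT (getb n a)" and x1: "X ! Suc p = setT n i"
    using X NotG by (auto dest: spec[of _ 0] spec[of _ 1])
  have v: "\<sigma> (reg n a) = vals ! a" using V NotG by simp
  have triv: "\<sigma>(Aux (Suc (n+i)) := False) = \<sigma>" using fun_upd_triv[of \<sigma> "Aux (Suc (n+i))"] A by simp
  show ?thesis
  proof (cases "vals ! a")
    case True
    show ?thesis
      apply (rule term_run.neg[where a="getb n a"])
      using L NotG x0 x1 v True R triv by (auto simp: numeral_eq_Suc)
  next
    case False
    show ?thesis
      apply (rule term_run.neg[where a="getb n a"])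
      using L NotG x0 v False apply (auto)[4]
      apply (simp add: v False)
      apply (rule term_run.plain[where a="BI (Aux (Suc (n + i))) (SetM True)"])
      using L NotG x1 v False R by (auto simp: numeral_eq_Suc)
  qed
next
  case (OrG a b)
  have x0: "X ! p = NegT (getb n a)" and x1: "X ! Suc p = PosT (getb n b)"
    and x2: "X ! Suc (Suc p) = setT n i"
    using X OrG by (auto dest: spec[of _ 0] spec[of _ 1] spec[of _ 2])
  have va: "\<sigma> (reg n a) = vals ! a" and vb: "\<sigma> (reg n b) = vals ! b" using V OrG by simp_all
  have triv: "\<sigma>(Aux (Suc (n+i)) := False) = \<sigma>" using fun_upd_triv[of \<sigma> "Aux (Suc (n+i))"] A by simp
  consider "vals ! a" | "\<not> vals ! a" "vals ! b" | "\<not> vals ! a" "\<not> vals ! b" by blast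
  then show ?thesis
  proof cases
    case 1
    show ?thesis
      apply (rule term_run.neg[where a="getb n a"])
      using L OrG x0 apply (auto)[4]
      apply (simp add: va 1)
      apply (rule term_run.plain[where a="BI (Aux (Suc (n + i))) (SetM True)"])
      using L OrG x2 1 R by (auto simp: numeral_eq_Suc)
  next
    case 2
    show ?thesis
      apply (rule term_run.neg[where a="getb n a"])
      using L OrG x0 apply (auto)[4]
      apply (simp add: va 2)
      apply (rule term_run.pos[where a="getb n b"])
      using L OrG x1 apply (auto)[4]
      apply (simp add: vb 2)
      apply (rule term_run.plain[where a="BI (Aux (Suc (n + i))) (SetM True)"])
      using L OrG x2 2 R by (auto simp: numeral_eq_Suc)
  next
    case 3
    show ?thesis
      apply (rule term_run.neg[where a="getb n a"])
      using L OrG x0 apply (auto)[4]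
      apply (simp add: va 3)
      apply (rule term_run.pos[where a="getb n b"])
      using L OrG x1 apply (auto)[4]
      using R OrG 3 triv vb by (simp add: numeral_eq_Suc)
  qed
next
  case (AndG a b)
  have x0: "X ! p = NegT (getb n a)" and x1: "X ! Suc p = Jump 3"
    and x2: "X ! Suc (Suc p) = PosT (getb n b)"
    and x3: "X ! Suc (Suc (Suc p)) = setT n i"
    using X AndG by (auto dest: spec[of _ 0] spec[of _ 1] spec[of _ 2] spec[of _ 3])
  have va: "\<sigma> (reg n a) = vals ! a" and vb: "\<sigma> (reg n b) = vals ! b" using V AndG by simp_all
  have triv: "\<sigma>(Aux (Suc (n+i)) := False) = \<sigma>" using fun_upd_triv[of \<sigma> "Aux (Suc (n+i))"] A by simp
  consider "\<not> vals ! a" | "vals ! a" "vals ! b" | "vals ! a" "\<not> vals ! b" by blast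
  then show ?thesis
  proof cases
    case 1
    show ?thesis
      apply (rule term_run.neg[where a="getb n a"])
      using L AndG x0 apply (auto)[4]
      apply (simp add: va 1)
      apply (rule term_run.jump[where l=3])
      using L AndG x1 1 R triv by (auto simp: numeral_eq_Suc)
  next
    case 2
    show ?thesis
      apply (rule term_run.neg[where a="getb n a"])
      using L AndG x0 apply (auto)[4]
      apply (simp add: va 2)
      apply (rule term_run.pos[where a="getb n b"])
      using L AndG x2 apply (auto simp: numeral_eq_Suc)[4]
      apply (simp add: vb 2)
      apply (rule term_run.plain[where a="BI (Aux (Suc (n + i))) (SetM True)"])
      using L AndG x3 2 R by (auto simp: numeral_eq_Suc)
  next
    case 3
    show ?thesis
      apply (rule term_run.neg[where a="getb n a"])
      using L AndG x0 apply (auto)[4]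
      apply (simp add: va 3)
      apply (rule term_run.pos[where a="getb n b"])
      using L AndG x2 apply (auto simp: numeral_eq_Suc)[4]
      using R AndG 3 triv vb by (simp add: numeral_eq_Suc)
  qed
qed


lemma eval_len[simp]: "length (eval_gates vs gs) = length vs + length gs"
  by (induction gs arbitrary: vs) auto

lemma eval_prefix: "k < length vs \<Longrightarrow> eval_gates vs gs ! k = vs ! k"
  by (induction gs arbitrary: vs) (auto simp: nth_append)

lemma gate_val_cong: "(\<forall>p\<in>set (gate_preds g). xs ! p = ys ! p) \<Longrightarrow> gate_val xs g = gate_val ys g"
  by (cases g) auto

lemma eval_gate:
  "i < length gs \<Longrightarrow> (\<forall>p\<in>set (gate_preds (gs!i)). p < length vs + i) \<Longrightarrow>
   eval_gates vs gs ! (length vs + i) = gate_val (eval_gates vs gs) (gs!i)"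
proof (induction gs arbitrary: vs i)
  case Nil
  then show ?case by simp
next
  case (Cons g gs)
  show ?case
  proof (cases i)
    case 0
    have "eval_gates vs (g # gs) ! length vs = gate_val vs g"
      by (simp add: eval_prefix)
    also have "\<dots> = gate_val (eval_gates vs (g # gs)) g"
      apply (rule gate_val_cong)
      using Cons.prems 0 by (auto simp: eval_prefix nth_append)
    finally show ?thesis using 0 by simp
  next
    case (Suc j)
    have "eval_gates (vs @ [gate_val vs g]) gs ! (length (vs @ [gate_val vs g]) + j)
       = gate_val (eval_gates (vs @ [gate_val vs g]) gs) (gs ! j)"
      apply (rule Cons.IH)
      using Cons.prems Suc by auto
    then show ?thesis using Suc by simp
  qed
qed

definition tailc :: "nat \<Rightarrow> nat \<Rightarrow> prim list" where
  "tailc n out = [PosT (getb n out), Plain (BI Out (SetM True)), Term]"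

lemma tail_run:
  assumes X: "X = P @ tailc n out" and O: "\<sigma> Out = False"
  shows "\<exists>\<sigma>'. term_run X n (Suc (length P)) \<sigma> \<sigma>' \<and> \<sigma>' Out = \<sigma> (reg n out)"
proof (cases "\<sigma> (reg n out)")
  case True
  have "term_run X n (Suc (length P)) \<sigma> (\<sigma>(Out := True))"
    apply (rule term_run.pos[where a="getb n out"])
    using X apply (auto simp: tailc_def)[4]
    apply (simp add: True)
    apply (rule term_run.plain[where a="BI Out (SetM True)"])
    using X apply (auto simp: tailc_def nth_append)[4]
    apply simp
    apply (rule term_run.halt)
    using X by (auto simp: tailc_def nth_append numeral_eq_Suc)
  then show ?thesis using True by auto
next
  case False
  have "term_run X n (Suc (length P)) \<sigma> \<sigma>"
    apply (rule term_run.pos[where a="getb n out"])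
    using X apply (auto simp: tailc_def)[4]
    apply (simp add: False)
    apply (rule term_run.halt)
    using X by (auto simp: tailc_def nth_append numeral_eq_Suc)
  then show ?thesis using False O by auto
qed

lemma blk_ok: "u \<in> set (blk n i g) \<Longrightarrow> basic_of u = Some a \<Longrightarrow> allowed_br a \<and> a \<noteq> BI Out (SetM False)"
  by (cases g) (auto simp: getb_def reg_def)

lemma tail_ok: "u \<in> set (tailc n out) \<Longrightarrow> basic_of u = Some a \<Longrightarrow> allowed_br a \<and> a \<noteq> BI Out (SetM False)"
  by (auto simp: tailc_def getb_def reg_def)

lemma concat_len: "length (concat (map (\<lambda>i. blk n i (gs ! i)) [0..<m])) \<le> 4 * m"
proof (induction m)
  case 0 then show ?case by simp
next
  case (Suc m)
  then show ?case using blk_len[of n m "gs ! m"] by simp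
qed

lemma upt_split3: "m < L \<Longrightarrow> [0..<L] = [0..<m] @ m # [Suc m..<L]"
  by (metis le_add_diff_inverse less_imp_le upt_add_eq_append upt_conv_Cons zero_le)

theorem theorem5:
  "\<exists>c :: nat. \<forall>n gs out. wf_circuit n gs out \<longrightarrow>
     (\<exists>X. IS_br X
          \<and> (\<forall>u \<in> set X. basic_of u \<noteq> Some (BI Out (SetM False)))
          \<and> computes X n (circuit_fun gs out)
          \<and> length X \<le> c * (circuit_size n gs + 1))"
proof (intro exI[of _ 4] allI impI)
  fix n gs out
  assume wf: "wf_circuit n gs out"
  define L where "L = length gs"
  define f where "f = (\<lambda>i. blk n i (gs ! i))"
  define G where "G = (\<lambda>m. concat (map f [0..<m]))"
  define X where "X = G L @ tailc n out"
  have GS: "G (Suc m) = G m @ f m" for m by (simp add: G_def)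
  have ok: "\<forall>u \<in> set X. \<forall>a. basic_of u = Some a \<longrightarrow> allowed_br a \<and> a \<noteq> BI Out (SetM False)"
    unfolding X_def G_def f_def using blk_ok tail_ok by fastforce
  have len: "length X \<le> 4 * (circuit_size n gs + 1)"
    using concat_len[of n gs L] by (simp add: X_def G_def f_def tailc_def circuit_size_def L_def)
  have comp: "computes X n (circuit_fun gs out)"
    unfolding computes_def
  proof (intro allI impI)
    fix bs :: "bool list"
    assume lbs: "length bs = n"
    define vals where "vals = eval_gates bs gs"
    define \<sigma> where "\<sigma> = (\<lambda>m fc. case fc of Aux j \<Rightarrow> n < j \<and> j \<le> n + m \<and> vals ! (j - 1)
                                | _ \<Rightarrow> init_regs bs fc)"
    have s0: "\<sigma> 0 = init_regs bs"
    proof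
      fix fc show "\<sigma> 0 fc = init_regs bs fc" by (cases fc) (auto simp: \<sigma>_def)
    qed
    have sS: "\<sigma> (Suc m) = (\<sigma> m)(Aux (Suc (n + m)) := vals ! (n + m))" for m
    proof
      fix fc show "\<sigma> (Suc m) fc = ((\<sigma> m)(Aux (Suc (n + m)) := vals ! (n + m))) fc"
        by (cases fc) (auto simp: \<sigma>_def)
    qed
    have rd: "\<sigma> m (reg n a) = vals ! a" if "a < n + m" for m a
    proof (cases "a < n")
      case True
      then show ?thesis using lbs by (simp add: \<sigma>_def reg_def vals_def eval_prefix)
    next
      case False
      then show ?thesis using that by (simp add: \<sigma>_def reg_def)
    qed
    have main: "d \<le> L \<Longrightarrow> \<exists>\<sigma>'. term_run X n (Suc (length (G (L - d)))) (\<sigma> (L - d)) \<sigma>' \<and> \<sigma>' Out = vals ! out" for d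
    proof (induction d)
      case 0
      have "out < n + L" using wf by (simp add: wf_circuit_def L_def)
      then show ?case using tail_run[OF X_def, of "\<sigma> L"] rd[of out L] by (simp add: \<sigma>_def)
    next
      case (Suc d)
      define m where "m = L - Suc d"
      have mL: "m < L" and mS: "L - d = Suc m" using Suc.prems by (auto simp: m_def)
      obtain \<sigma>' where r: "term_run X n (Suc (length (G (Suc m)))) (\<sigma> (Suc m)) \<sigma>'" and o: "\<sigma>' Out = vals ! out"
        using Suc.IH Suc.prems mS by auto
      have XG: "X = G m @ f m @ (concat (map f [Suc m..<L]) @ tailc n out)"
        unfolding X_def G_def using upt_split3[OF mL] by simp
      have preds: "\<forall>p\<in>set (gate_preds (gs ! m)). p < n + m"
        using wf mL by (simp add: wf_circuit_def L_def)
      have gv: "vals ! (n + m) = gate_val vals (gs ! m)"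
        using eval_gate[of m gs bs] preds mL lbs by (simp add: vals_def L_def)
      have "term_run X n (Suc (length (G m))) (\<sigma> m) \<sigma>'"
      proof (rule blk_run[where i=m and g="gs ! m" and vals=vals])
        show "\<forall>j<length (blk n m (gs ! m)). X ! (length (G m) + j) = blk n m (gs ! m) ! j"
          using XG by (simp add: f_def nth_append)
        show "length (G m) + length (blk n m (gs ! m)) \<le> length X"
          using XG by (simp add: f_def)
        show "\<sigma> m (Aux (Suc (n + m))) = False" by (simp add: \<sigma>_def)
        show "\<forall>a\<in>set (gate_preds (gs ! m)). \<sigma> m (reg n a) = vals ! a"
          using preds rd by blast
        show "term_run X n (Suc (length (G m)) + length (blk n m (gs ! m)))
               ((\<sigma> m)(Aux (Suc (n + m)) := gate_val vals (gs ! m))) \<sigma>'"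
          using r by (simp add: GS f_def sS gv)
      qed
      then show ?case using o m_def by auto
    qed
    from main[of L] obtain \<sigma>' where "term_run X n 1 (init_regs bs) \<sigma>'" "\<sigma>' Out = vals ! out"
      by (auto simp: G_def s0)
    then show "\<exists>\<sigma>'. term_run X n 1 (init_regs bs) \<sigma>' \<and> \<sigma>' Out = circuit_fun gs out bs"
      by (auto simp: circuit_fun_def vals_def)
  qed
  show "\<exists>X. IS_br X
          \<and> (\<forall>u \<in> set X. basic_of u \<noteq> Some (BI Out (SetM False)))
          \<and> computes X n (circuit_fun gs out)
          \<and> length X \<le> 4 * (circuit_size n gs + 1)"
    apply (rule exI[of _ X])
    using ok len comp by (auto simp: IS_br_def X_def tailc_def)
qed

end
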